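(* At each $t$ where $g(t)=S(t)^{-1}\bar S(t)$, the matrix $J=S\Upsilon_1S^{-1}$ satisfies, for every $j\ge1$, $$J^j=\sum_{a=1}^{p_1}L_a^j=\sum_{b=1}^{p_2}\bar L_b^j,$$ and $J^j\mathcal A_{a'}=x^j\mathcal A_{a'}$, $(J^j)^\top\bar{\mathcal A}_{b'}=x^j\bar{\mathcal A}_{b'}$ for $a'=1,\dots,p_1$, $b'=1,\dots,p_2$.
   Context: $\mu$ finite Borel measure on an interval; weights $w_{1,a}$ ($a\le p_1$), $w_{2,b}$ ($b\le p_2$); compositions $\vec n_\ell\in\mathbb N^{p_\ell}$; each $i\in\mathbb Z_+$ is uniquely $i=q|\vec n_\ell|+n_{\ell,1}+\dots+n_{\ell,a-1}+r$ ($0\le r<n_{\ell,a}$), $a_\ell(i)=a$, $k_\ell(i)=qn_{\ell,a}+r$; moment matrix $g_{i,j}=\int x^{k_1(i)+k_2(j)}w_{1,a_1(i)}w_{2,a_2(j)}d\mu$. $e_{\ell,a}(k)=e_i$ with $a_\ell(i)=a,k_\ell(i)=k$; $\Lambda_{\ell,a}=\sum_ke_{\ell,a}(k)e_{\ell,a}(k+1)^\top$, $\Upsilon_\ell=\sum_a\Lambda_{\ell,a}$; $\chi_{\ell,a}(x)=\sum_ke_{\ell,a}(k)x^k$. Real times $t=(t_{j,a},\bar t_{j,b})$; $W_0(t)=\exp(\sum_{a,j}t_{j,a}\Lambda_{1,a}^j)$, $\bar W_0(t)=\exp(\sum_{b,j}\bar t_{j,b}(\Lambda_{2,b}^\top)^j)$,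 $g(t)=W_0(t)g\bar W_0(t)^{-1}$ (integrals assumed convergent), factorized as $g(t)=S(t)^{-1}\bar S(t)$ with $S$ unit lower triangular and $\bar S$ upper triangular invertible. $L_a=S\Lambda_{1,a}S^{-1}$, $\bar L_b=\bar S\Lambda_{2,b}^\top\bar S^{-1}$, $\mathcal A_a=S\chi_{1,a}(x)$, $\bar{\mathcal A}_b=(\bar S^{-1})^\top\chi_{2,b}(x)$. *)

theory Defs
  imports "HOL-Analysis.Analysis"
begin

text \<open>Products are entrywise (unconditional) infinite sums; in all products
  occurring in the statement only finitely many terms are nonzero.\<close>

type_synonym smat = "nat \<Rightarrow> nat \<Rightarrow> real"
type_synonym svec = "nat \<Rightarrow> real"

definition mmul :: "smat \<Rightarrow> smat \<Rightarrow> smat" where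
  "mmul A B = (\<lambda>i j. infsum (\<lambda>k. A i k * B k j) UNIV)"

definition mvmul :: "smat \<Rightarrow> svec \<Rightarrow> svec" where
  "mvmul A v = (\<lambda>i. infsum (\<lambda>k. A i k * v k) UNIV)"

definition mtrans :: "smat \<Rightarrow> smat" where
  "mtrans A = (\<lambda>i j. A j i)"

definition mid :: smat where
  "mid = (\<lambda>i j. if i = j then 1 else 0)"

primrec mpow :: "smat \<Rightarrow> nat \<Rightarrow> smat" where
  "mpow A 0 = mid"
| "mpow A (Suc m) = mmul (mpow A m) A"

definition minv :: "smat \<Rightarrow> smat" where
  "minv A = (THE X. mmul A X = mid \<and> mmul X A = mid)"

definition mexp :: "smat \<Rightarrow> smat" where
  "mexp X = (\<lambda>i j. infsum (\<lambda>m. mpow X m i j / fact m) UNIV)"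

text \<open>Compositions \<open>n\<close> with \<open>p\<close> parts \<open>n 1, ..., n p\<close>; \<open>|n|\<close>.\<close>
definition cnorm :: "nat \<Rightarrow> (nat \<Rightarrow> nat) \<Rightarrow> nat" where
  "cnorm p n = (\<Sum>c=1..p. n c)"

text \<open>Writing \<open>i = q|n| + n_1 + ... + n_(a-1) + r\<close> with \<open>0 \<le> r < n_a\<close>:
  \<open>aidx i = a\<close> and \<open>kidx i = q n_a + r\<close>.\<close>
definition aidx :: "nat \<Rightarrow> (nat \<Rightarrow> nat) \<Rightarrow> nat \<Rightarrow> nat" where
  "aidx p n i = (LEAST a. i mod cnorm p n < (\<Sum>c=1..a. n c))"

definition kidx :: "nat \<Rightarrow> (nat \<Rightarrow> nat) \<Rightarrow> nat \<Rightarrow> nat" where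
  "kidx p n i = (i div cnorm p n) * n (aidx p n i)
                 + (i mod cnorm p n - (\<Sum>c=1..<aidx p n i. n c))"

definition Lam :: "nat \<Rightarrow> (nat \<Rightarrow> nat) \<Rightarrow> nat \<Rightarrow> smat" where
  "Lam p n a = (\<lambda>i j. if aidx p n i = a \<and> aidx p n j = a \<and> kidx p n j = kidx p n i + 1
                       then 1 else 0)"

definition Ups :: "nat \<Rightarrow> (nat \<Rightarrow> nat) \<Rightarrow> smat" where
  "Ups p n = (\<lambda>i j. \<Sum>a=1..p. Lam p n a i j)"

definition chi :: "nat \<Rightarrow> (nat \<Rightarrow> nat) \<Rightarrow> nat \<Rightarrow> real \<Rightarrow> svec" where
  "chi p n a x = (\<lambda>i. if aidx p n i = a then x ^ kidx p n i else 0)"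

definition gmom :: "real measure \<Rightarrow> (nat \<Rightarrow> real \<Rightarrow> real) \<Rightarrow> (nat \<Rightarrow> real \<Rightarrow> real)
    \<Rightarrow> nat \<Rightarrow> (nat \<Rightarrow> nat) \<Rightarrow> nat \<Rightarrow> (nat \<Rightarrow> nat) \<Rightarrow> smat" where
  "gmom M w1 w2 p1 n1 p2 n2 = (\<lambda>i j.
     integral\<^sup>L M (\<lambda>x. x ^ (kidx p1 n1 i + kidx p2 n2 j)
                        * w1 (aidx p1 n1 i) x * w2 (aidx p2 n2 j) x))"

definition W0 :: "nat \<Rightarrow> (nat \<Rightarrow> nat) \<Rightarrow> (nat \<Rightarrow> nat \<Rightarrow> real) \<Rightarrow> smat" where
  "W0 p n t = mexp (\<lambda>i k. \<Sum>a=1..p. infsum (\<lambda>j. t j a * mpow (Lam p n a) j i k) {1..})"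

definition W0bar :: "nat \<Rightarrow> (nat \<Rightarrow> nat) \<Rightarrow> (nat \<Rightarrow> nat \<Rightarrow> real) \<Rightarrow> smat" where
  "W0bar p n tb = mexp (\<lambda>i k. \<Sum>b=1..p. infsum (\<lambda>j. tb j b * mpow (mtrans (Lam p n b)) j i k) {1..})"

end

theory Submission
  imports Defs
begin



lemma infsum_supp:
  fixes f :: "nat \<Rightarrow> real"
  assumes "finite K" "\<And>k. k \<notin> K \<Longrightarrow> f k = 0"
  shows "infsum f UNIV = sum f K"
proof -
  have "infsum f UNIV = infsum f K"
    by (rule infsum_cong_neutral) (use assms in auto)
  then show ?thesis using assms by simp
qed

lemma summable_supp:
  fixes f :: "nat \<Rightarrow> real"
  assumes "finite K" "\<And>k. k \<notin> K \<Longrightarrow> f k = 0"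
  shows "f summable_on UNIV"
proof -
  have "f summable_on UNIV \<longleftrightarrow> f summable_on K"
    by (rule summable_on_cong_neutral) (use assms in auto)
  then show ?thesis using assms by simp
qed

lemma summable_fin:
  fixes f :: "nat \<Rightarrow> real"
  assumes "finite {k. f k \<noteq> 0}"
  shows "f summable_on UNIV"
  using summable_supp[OF assms] by auto

lemma infsum_fin:
  fixes f :: "nat \<Rightarrow> real"
  assumes "finite {k. f k \<noteq> 0}"
  shows "infsum f UNIV = sum f {k. f k \<noteq> 0}"
  using infsum_supp[OF assms] by auto

lemma infsum_sum_swap:
  fixes F :: "'b \<Rightarrow> nat \<Rightarrow> real"
  assumes "finite K" "\<And>k. k \<in> K \<Longrightarrow> F k summable_on UNIV"
  shows "infsum (\<lambda>l. \<Sum>k\<in>K. F k l) UNIV = (\<Sum>k\<in>K. infsum (F k) UNIV)"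
  using assms
proof (induction K rule: finite_induct)
  case empty then show ?case by simp
next
  case (insert x F')
  have s: "(\<lambda>l. \<Sum>k\<in>F'. F k l) summable_on UNIV"
  proof -
    have "\<And>K. finite K \<Longrightarrow> K \<subseteq> insert x F' \<Longrightarrow> (\<lambda>l. \<Sum>k\<in>K. F k l) summable_on UNIV"
    proof -
      fix K :: "'b set" assume "finite K" "K \<subseteq> insert x F'"
      then show "(\<lambda>l. \<Sum>k\<in>K. F k l) summable_on UNIV"
        by (induction K rule: finite_induct) (auto intro!: summable_on_add insert.prems)
    qed
    then show ?thesis using insert by auto
  qed
  have "infsum (\<lambda>l. \<Sum>k\<in>insert x F'. F k l) UNIV = infsum (\<lambda>l. F x l + (\<Sum>k\<in>F'. F k l)) UNIV"
    using insert by simp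
  also have "\<dots> = infsum (F x) UNIV + infsum (\<lambda>l. \<Sum>k\<in>F'. F k l) UNIV"
    by (rule infsum_add) (use insert s in auto)
  finally show ?case using insert by simp
qed

definition rowfin :: "smat \<Rightarrow> bool" where
  "rowfin A \<longleftrightarrow> (\<forall>i. finite {k. A i k \<noteq> 0})"
definition colfin :: "smat \<Rightarrow> bool" where
  "colfin A \<longleftrightarrow> (\<forall>j. finite {k. A k j \<noteq> 0})"

lemma assoc_row:
  assumes fin: "finite {k. A i k \<noteq> 0}"
    and sm: "\<And>k. (\<lambda>l. B k l * C l j) summable_on UNIV"
  shows "mmul (mmul A B) C i j = mmul A (mmul B C) i j"
proof -
  define K where "K = {k. A i k \<noteq> 0}"
  have AB: "mmul A B i l = (\<Sum>k\<in>K. A i k * B k l)" for l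
    unfolding mmul_def by (rule infsum_supp) (use fin K_def in auto)
  have "mmul (mmul A B) C i j = infsum (\<lambda>l. \<Sum>k\<in>K. A i k * (B k l * C l j)) UNIV"
    unfolding mmul_def[of "mmul A B"] AB by (simp add: sum_distrib_right mult.assoc)
  also have "\<dots> = (\<Sum>k\<in>K. infsum (\<lambda>l. A i k * (B k l * C l j)) UNIV)"
    by (rule infsum_sum_swap) (use fin K_def sm in \<open>auto intro: summable_on_cmult_right\<close>)
  also have "\<dots> = (\<Sum>k\<in>K. A i k * mmul B C k j)"
    by (simp add: infsum_cmult_right' mmul_def)
  also have "\<dots> = mmul A (mmul B C) i j"
    unfolding mmul_def[of A] by (rule infsum_supp[symmetric]) (use fin K_def in auto)
  finally show ?thesis .
qed

lemma assoc_col: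
  assumes fin: "finite {l. C l j \<noteq> 0}"
    and sm: "\<And>l. (\<lambda>k. A i k * B k l) summable_on UNIV"
  shows "mmul (mmul A B) C i j = mmul A (mmul B C) i j"
proof -
  define L where "L = {l. C l j \<noteq> 0}"
  have BC: "mmul B C k j = (\<Sum>l\<in>L. B k l * C l j)" for k
    unfolding mmul_def by (rule infsum_supp) (use fin L_def in auto)
  have "mmul A (mmul B C) i j = infsum (\<lambda>k. \<Sum>l\<in>L. (A i k * B k l) * C l j) UNIV"
    unfolding mmul_def[of A] BC by (simp add: sum_distrib_left mult.assoc)
  also have "\<dots> = (\<Sum>l\<in>L. infsum (\<lambda>k. (A i k * B k l) * C l j) UNIV)"
    by (rule infsum_sum_swap) (use fin L_def sm in \<open>auto intro: summable_on_cmult_left\<close>)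
  also have "\<dots> = (\<Sum>l\<in>L. mmul A B i l * C l j)"
    by (simp add: infsum_cmult_left' mmul_def)
  also have "\<dots> = mmul (mmul A B) C i j"
    unfolding mmul_def[of "mmul A B"] by (rule infsum_supp[symmetric]) (use fin L_def in auto)
  finally show ?thesis by simp
qed




definition zmat :: smat where "zmat = (\<lambda>i j. 0)"
definition msum :: "'b set \<Rightarrow> ('b \<Rightarrow> smat) \<Rightarrow> smat" where
  "msum K F = (\<lambda>i j. \<Sum>a\<in>K. F a i j)"
definition smul :: "real \<Rightarrow> smat \<Rightarrow> smat" where
  "smul c A = (\<lambda>i j. c * A i j)"

lemma mmul_mid_left[simp]: "mmul mid A = A"
proof (intro ext)
  fix i j
  have "mmul mid A i j = sum (\<lambda>k. mid i k * A k j) {i}"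
    unfolding mmul_def by (rule infsum_supp) (auto simp: mid_def)
  then show "mmul mid A i j = A i j" by (simp add: mid_def)
qed

lemma mmul_mid_right[simp]: "mmul A mid = A"
proof (intro ext)
  fix i j
  have "mmul A mid i j = sum (\<lambda>k. A i k * mid k j) {j}"
    unfolding mmul_def by (rule infsum_supp) (auto simp: mid_def)
  then show "mmul A mid i j = A i j" by (simp add: mid_def)
qed

lemma mmul_zero_right[simp]: "mmul A zmat = zmat"
  by (simp add: mmul_def zmat_def)
lemma mmul_zero_left[simp]: "mmul zmat A = zmat"
  by (simp add: mmul_def zmat_def)

lemma mtrans_mmul: "mtrans (mmul A B) = mmul (mtrans B) (mtrans A)"
  by (simp add: mtrans_def mmul_def mult.commute)
lemma mtrans_mtrans[simp]: "mtrans (mtrans A) = A"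
  by (simp add: mtrans_def)
lemma mtrans_mid[simp]: "mtrans mid = mid"
  by (auto simp: mtrans_def mid_def fun_eq_iff)
lemma mtrans_msum: "mtrans (msum K F) = msum K (\<lambda>a. mtrans (F a))"
  by (simp add: mtrans_def msum_def)

lemma mmul_nz: "mmul A B i j \<noteq> 0 \<Longrightarrow> \<exists>k. A i k \<noteq> 0 \<and> B k j \<noteq> 0"
  unfolding mmul_def by (metis (mono_tags, lifting) infsum_0 mult_eq_0_iff)

lemma rowfin_mmul: assumes "rowfin A" "rowfin B" shows "rowfin (mmul A B)"
  unfolding rowfin_def
proof
  fix i
  have "{j. mmul A B i j \<noteq> 0} \<subseteq> (\<Union>k\<in>{k. A i k \<noteq> 0}. {j. B k j \<noteq> 0})"
    using mmul_nz by blast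
  moreover have "finite (\<Union>k\<in>{k. A i k \<noteq> 0}. {j. B k j \<noteq> 0})"
    using assms unfolding rowfin_def by blast
  ultimately show "finite {j. mmul A B i j \<noteq> 0}" by (rule finite_subset)
qed

lemma colfin_rowfin: "colfin A \<longleftrightarrow> rowfin (mtrans A)"
  by (simp add: colfin_def rowfin_def mtrans_def)

lemma colfin_mmul: assumes "colfin A" "colfin B" shows "colfin (mmul A B)"
  using assms by (simp add: colfin_rowfin mtrans_mmul rowfin_mmul)

lemma rowfin_mid[simp]: "rowfin mid"
proof -
  have "{k. mid i k \<noteq> 0} = {i}" for i by (auto simp: mid_def)
  then show ?thesis by (simp add: rowfin_def)
qed
lemma colfin_mid[simp]: "colfin mid"
  by (simp add: colfin_rowfin)

lemma rowfin_mpow: "rowfin A \<Longrightarrow> rowfin (mpow A m)"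
  by (induction m) (auto intro: rowfin_mmul)

lemma lower_rowfin: assumes "\<forall>i j. i < j \<longrightarrow> A i j = 0" shows "rowfin A"
  unfolding rowfin_def
proof
  fix i show "finite {k. A i k \<noteq> 0}"
    by (rule finite_subset[of _ "{..i}"]) (use assms not_le in auto)
qed
lemma upper_colfin: assumes "\<forall>i j. j < i \<longrightarrow> A i j = 0" shows "colfin A"
  unfolding colfin_def
proof
  fix i show "finite {k. A k i \<noteq> 0}"
    by (rule finite_subset[of _ "{..i}"]) (use assms not_le in auto)
qed

lemma sm_rowB: "rowfin B \<Longrightarrow> (\<lambda>l. B k l * C l j) summable_on UNIV"
  by (rule summable_fin, rule finite_subset[of _ "{l. B k l \<noteq> 0}"]) (auto simp: rowfin_def)
lemma sm_colC: "colfin C \<Longrightarrow> (\<lambda>l. B k l * C l j) summable_on UNIV"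
  by (rule summable_fin, rule finite_subset[of _ "{l. C l j \<noteq> 0}"]) (auto simp: colfin_def)

lemma assoc_rr: "rowfin A \<Longrightarrow> rowfin B \<Longrightarrow> mmul (mmul A B) C = mmul A (mmul B C)"
  by (intro ext assoc_row) (auto simp: rowfin_def intro: sm_rowB)
lemma assoc_rc: "rowfin A \<Longrightarrow> colfin C \<Longrightarrow> mmul (mmul A B) C = mmul A (mmul B C)"
  by (intro ext assoc_row) (auto simp: rowfin_def intro: sm_colC)
lemma assoc_cc: "colfin B \<Longrightarrow> colfin C \<Longrightarrow> mmul (mmul A B) C = mmul A (mmul B C)"
  by (intro ext assoc_col) (auto simp: colfin_def intro: sm_colC)

lemma mmul_sum_right:
  assumes "finite K" "rowfin A"
  shows "mmul A (msum K F) = msum K (\<lambda>a. mmul A (F a))"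
proof (intro ext)
  fix i j
  have "mmul A (msum K F) i j = infsum (\<lambda>k. \<Sum>a\<in>K. A i k * F a k j) UNIV"
    by (simp add: mmul_def msum_def sum_distrib_left)
  also have "\<dots> = (\<Sum>a\<in>K. infsum (\<lambda>k. A i k * F a k j) UNIV)"
  proof (rule infsum_sum_swap)
    fix a assume "a \<in> K"
    show "(\<lambda>k. A i k * F a k j) summable_on UNIV"
      by (rule summable_fin, rule finite_subset[of _ "{k. A i k \<noteq> 0}"]) (use assms in \<open>auto simp: rowfin_def\<close>)
  qed (use assms in auto)
  finally show "mmul A (msum K F) i j = msum K (\<lambda>a. mmul A (F a)) i j"
    by (simp add: mmul_def msum_def)
qed

lemma mmul_sum_left:
  assumes "finite K" "\<forall>a\<in>K. rowfin (F a)"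
  shows "mmul (msum K F) B = msum K (\<lambda>a. mmul (F a) B)"
proof (intro ext)
  fix i j
  have "mmul (msum K F) B i j = infsum (\<lambda>k. \<Sum>a\<in>K. F a i k * B k j) UNIV"
    by (simp add: mmul_def msum_def sum_distrib_right)
  also have "\<dots> = (\<Sum>a\<in>K. infsum (\<lambda>k. F a i k * B k j) UNIV)"
  proof (rule infsum_sum_swap)
    fix a assume "a \<in> K"
    show "(\<lambda>k. F a i k * B k j) summable_on UNIV"
      by (rule summable_fin, rule finite_subset[of _ "{k. F a i k \<noteq> 0}"]) (use assms \<open>a\<in>K\<close> in \<open>auto simp: rowfin_def\<close>)
  qed (use assms in auto)
  finally show "mmul (msum K F) B i j = msum K (\<lambda>a. mmul (F a) B) i j"
    by (simp add: mmul_def msum_def)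
qed

lemma rowfin_msum: "finite K \<Longrightarrow> \<forall>a\<in>K. rowfin (F a) \<Longrightarrow> rowfin (msum K F)"
  unfolding rowfin_def msum_def
proof
  fix i assume a: "finite K" "\<forall>a\<in>K. \<forall>i. finite {k. F a i k \<noteq> 0}"
  have "{k. (\<Sum>a\<in>K. F a i k) \<noteq> 0} \<subseteq> (\<Union>a\<in>K. {k. F a i k \<noteq> 0})"
    by (auto dest: sum.not_neutral_contains_not_neutral)
  moreover have "finite (\<Union>a\<in>K. {k. F a i k \<noteq> 0})" using a by auto
  ultimately show "finite {k. (\<Sum>a\<in>K. F a i k) \<noteq> 0}" by (rule finite_subset)
qed

lemma msum_cong: "(\<And>a. a \<in> K \<Longrightarrow> F a = G a) \<Longrightarrow> msum K F = msum K G"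
  by (simp add: msum_def)

lemma mpow_one: "mpow A (Suc 0) = A" by simp

lemma pow_sum:
  assumes K: "finite K" and rf: "\<forall>a\<in>K. rowfin (M a)"
    and orth: "\<forall>a\<in>K. \<forall>b\<in>K. a \<noteq> b \<longrightarrow> mmul (M a) (M b) = zmat"
    and m: "m \<ge> 1"
  shows "mpow (msum K M) m = msum K (\<lambda>a. mpow (M a) m)"
  using m
proof (induction m rule: dec_induct)
  case base then show ?case by simp
next
  case (step m)
  have rfp: "\<forall>a\<in>K. rowfin (mpow (M a) m)" using rf rowfin_mpow by blast
  have "mpow (msum K M) (Suc m) = mmul (msum K (\<lambda>a. mpow (M a) m)) (msum K M)"
    using step by simp
  also have "\<dots> = msum K (\<lambda>a. mmul (mpow (M a) m) (msum K M))"
    by (rule mmul_sum_left) (use K rfp in auto)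
  also have "\<dots> = msum K (\<lambda>a. msum K (\<lambda>b. mmul (mpow (M a) m) (M b)))"
  proof -
    have "mmul (mpow (M a) m) (msum K M) = msum K (\<lambda>b. mmul (mpow (M a) m) (M b))" if "a \<in> K" for a
      by (rule mmul_sum_right) (use K rfp that in auto)
    then show ?thesis unfolding msum_def[of K "\<lambda>a. mmul (mpow (M a) m) (msum K M)"]
      by (auto simp: msum_def intro!: ext sum.cong)
  qed
  also have "\<dots> = msum K (\<lambda>a. mpow (M a) (Suc m))"
  proof -
    have "msum K (\<lambda>b. mmul (mpow (M a) m) (M b)) = mpow (M a) (Suc m)" if a: "a \<in> K" for a
    proof -
      have z: "mmul (mpow (M a) m) (M b) = zmat" if "b \<in> K" "b \<noteq> a" for b
      proof -
        obtain m' where m': "m = Suc m'" using step(1) by (cases m) auto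
        have "mmul (mpow (M a) m) (M b) = mmul (mpow (M a) m') (mmul (M a) (M b))"
          unfolding m' mpow.simps by (rule assoc_rr) (use rf rowfin_mpow a in auto)
        then show ?thesis using orth a that by auto
      qed
      have "msum K (\<lambda>b. mmul (mpow (M a) m) (M b)) = (\<lambda>i j. \<Sum>b\<in>K. mmul (mpow (M a) m) (M b) i j)"
        by (simp add: msum_def)
      also have "\<dots> = (\<lambda>i j. mmul (mpow (M a) m) (M a) i j)"
      proof (intro ext)
        fix i j
        show "(\<Sum>b\<in>K. mmul (mpow (M a) m) (M b) i j) = mmul (mpow (M a) m) (M a) i j"
          by (subst sum.remove[OF K a]) (auto simp: z zmat_def intro!: sum.neutral)
      qed
      finally show ?thesis by simp
    qed
    then show ?thesis by (rule msum_cong)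
  qed
  finally show ?case .
qed




definition vm :: "svec \<Rightarrow> smat" where "vm v = (\<lambda>k j. v k)"

lemma mvmul_vm: "mvmul A v i = mmul A (vm v) i j"
  by (simp add: mvmul_def mmul_def vm_def)
lemma mmul_vm: "mmul A (\<lambda>k j. v k) i j = mvmul A v i"
  by (simp add: mvmul_def mmul_def)
lemma vm_mvmul: "vm (mvmul A v) = mmul A (vm v)"
  by (simp add: mvmul_def mmul_def vm_def)
lemma vm_inj: "vm u = vm v \<Longrightarrow> u = v"
  by (simp add: vm_def fun_eq_iff)

lemma mmul_smul_right: "mmul A (smul c B) = smul c (mmul A B)"
  by (simp add: mmul_def smul_def mult.left_commute infsum_cmult_right')

lemma mpow_comm: "rowfin A \<Longrightarrow> mmul A (mpow A m) = mmul (mpow A m) A"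
proof (induction m)
  case 0 then show ?case by simp
next
  case (Suc m)
  have "mmul A (mpow A (Suc m)) = mmul (mmul A (mpow A m)) A"
    by (simp add: assoc_rr[symmetric] Suc.prems rowfin_mpow)
  then show ?case using Suc by simp
qed

lemma mtrans_mpow: "rowfin (mtrans A) \<Longrightarrow> mtrans (mpow A m) = mpow (mtrans A) m"
proof (induction m)
  case 0 then show ?case by simp
next
  case (Suc m)
  then show ?case by (simp add: mtrans_mmul mpow_comm)
qed

lemma GL:
  assumes K: "finite K" and P: "rowfin P" and Q: "rowfin Q" and QP: "mmul Q P = mid"
    and Lr: "\<forall>a\<in>K. rowfin (Lm a)"
    and Lo: "\<forall>a\<in>K. \<forall>b\<in>K. a \<noteq> b \<longrightarrow> mmul (Lm a) (Lm b) = zmat"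
    and m: "m \<ge> 1"
  shows "mpow (mmul (mmul P (msum K Lm)) Q) m = msum K (\<lambda>a. mpow (mmul (mmul P (Lm a)) Q) m)"
proof -
  define M where "M a = mmul (mmul P (Lm a)) Q" for a
  have rM: "\<forall>a\<in>K. rowfin (M a)" using P Q Lr by (auto simp: M_def intro!: rowfin_mmul)
  have "mmul (mmul P (msum K Lm)) Q = mmul (msum K (\<lambda>a. mmul P (Lm a))) Q"
    by (simp add: mmul_sum_right K P)
  also have "\<dots> = msum K M"
    unfolding M_def by (rule mmul_sum_left) (use K P Lr in \<open>auto intro: rowfin_mmul\<close>)
  finally have eq: "mmul (mmul P (msum K Lm)) Q = msum K M" .
  have orth: "mmul (M a) (M b) = zmat" if "a \<in> K" "b \<in> K" "a \<noteq> b" for a b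
  proof -
    have ra: "rowfin (mmul P (Lm a))" "rowfin (mmul P (Lm b))" using P Lr that by (auto intro: rowfin_mmul)
    have "mmul (M a) (M b) = mmul (mmul P (Lm a)) (mmul Q (M b))"
      unfolding M_def by (rule assoc_rr) (use ra Q in auto)
    also have "mmul Q (M b) = mmul (mmul Q (mmul P (Lm b))) Q"
      unfolding M_def by (rule assoc_rr[symmetric]) (use ra Q in auto)
    also have "mmul Q (mmul P (Lm b)) = Lm b"
      using assoc_rr[OF Q P, of "Lm b"] QP by simp
    also have "mmul (mmul P (Lm a)) (mmul (Lm b) Q) = mmul (mmul (mmul P (Lm a)) (Lm b)) Q"
      by (rule assoc_rr[symmetric]) (use ra Lr that in auto)
    also have "mmul (mmul P (Lm a)) (Lm b) = mmul P (mmul (Lm a) (Lm b))"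
      by (rule assoc_rr) (use P Lr that in auto)
    finally show ?thesis using Lo that by simp
  qed
  show ?thesis unfolding eq M_def[symmetric]
    by (rule pow_sum) (use K rM orth m in auto)
qed

lemma GE:
  assumes P: "rowfin P" and Q: "rowfin Q" and QP: "mmul Q P = mid"
    and Y: "rowfin Y" and ev: "mvmul Y v = (\<lambda>i. x * v i)"
  shows "mvmul (mpow (mmul (mmul P Y) Q) m) (mvmul P v) = (\<lambda>i. x ^ m * mvmul P v i)"
proof -
  define J where "J = mmul (mmul P Y) Q"
  define X where "X = vm v"
  have rJ: "rowfin J" unfolding J_def using P Q Y by (auto intro: rowfin_mmul)
  have YX: "mmul Y X = smul x X"
  proof -
    have "mmul Y X = vm (mvmul Y v)" by (simp add: vm_mvmul X_def)
    also have "\<dots> = smul x X" by (simp add: ev vm_def smul_def X_def)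
    finally show ?thesis .
  qed
  have JPX: "mmul J (mmul P X) = smul x (mmul P X)"
  proof -
    have "mmul J (mmul P X) = mmul (mmul P Y) (mmul Q (mmul P X))"
      unfolding J_def by (rule assoc_rr) (use P Y Q in \<open>auto intro: rowfin_mmul\<close>)
    also have "mmul Q (mmul P X) = X" using assoc_rr[OF Q P, of X] QP by simp
    also have "mmul (mmul P Y) X = mmul P (mmul Y X)" by (rule assoc_rr) (use P Y in auto)
    finally show ?thesis by (simp add: YX mmul_smul_right)
  qed
  have "mmul (mpow J m) (mmul P X) = smul (x ^ m) (mmul P X)"
  proof (induction m)
    case 0 then show ?case by (simp add: smul_def)
  next
    case (Suc m)
    have "mmul (mpow J (Suc m)) (mmul P X) = mmul (mpow J m) (mmul J (mmul P X))"
      by (simp, rule assoc_rr) (use rJ rowfin_mpow in auto)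
    also have "\<dots> = smul x (mmul (mpow J m) (mmul P X))" by (simp add: JPX mmul_smul_right)
    finally show ?case using Suc.IH by (simp add: smul_def fun_eq_iff)
  qed
  moreover have "vm (\<lambda>i. x ^ m * mvmul P v i) = smul (x^m) (mmul P X)"
    by (simp add: smul_def vm_def X_def mmul_vm)
  ultimately have "vm (mvmul (mpow J m) (mvmul P v)) = vm (\<lambda>i. x ^ m * mvmul P v i)"
    by (simp add: vm_mvmul X_def)
  then show ?thesis unfolding J_def by (rule vm_inj)
qed

lemma minv_lower:
  assumes A: "\<forall>i j. i < j \<longrightarrow> A i j = 0" and X: "rowfin X"
    and AX: "mmul A X = mid" and XA: "mmul X A = mid"
  shows "minv A = X"
  unfolding minv_def
proof (rule the_equality)
  show "mmul A X = mid \<and> mmul X A = mid" using AX XA by simp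
next
  fix Z assume "mmul A Z = mid \<and> mmul Z A = mid"
  then have "Z = mmul (mmul X A) Z" using XA by simp
  also have "\<dots> = mmul X (mmul A Z)" by (rule assoc_rr) (use X lower_rowfin[OF A] in auto)
  finally show "Z = X" using \<open>mmul A Z = mid \<and> _\<close> by simp
qed

lemma minv_upper:
  assumes A: "colfin A" and X: "colfin X"
    and AX: "mmul A X = mid" and XA: "mmul X A = mid"
  shows "minv A = X"
  unfolding minv_def
proof (rule the_equality)
  show "mmul A X = mid \<and> mmul X A = mid" using AX XA by simp
next
  fix Z assume "mmul A Z = mid \<and> mmul Z A = mid"
  then have "Z = mmul Z (mmul A X)" using AX by simp
  also have "\<dots> = mmul (mmul Z A) X" by (rule assoc_cc[symmetric]) (use X A in auto)
  finally show "Z = X" using \<open>mmul A Z = mid \<and> _\<close> by simp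
qed

function rinv :: "smat \<Rightarrow> nat \<Rightarrow> nat \<Rightarrow> real" where
  "rinv A i j = (if i < j then 0 else ((if i = j then 1 else 0) - (\<Sum>k<i. A i k * rinv A k j)) / A i i)"
  by pat_completeness auto
termination by (relation "Wellfounded.measure (\<lambda>(A,i,j). i)") auto

function linv :: "smat \<Rightarrow> nat \<Rightarrow> nat \<Rightarrow> real" where
  "linv A i j = (if i < j then 0 else ((if i = j then 1 else 0) - (\<Sum>k\<in>{j<..i}. linv A i k * A k j)) / A j j)"
  by pat_completeness auto
termination by (relation "Wellfounded.measure (\<lambda>(A,i,j). i - j)") auto

declare rinv.simps[simp del] linv.simps[simp del]

lemma rinv_lower: "i < j \<Longrightarrow> rinv A i j = 0"
  by (subst rinv.simps) simp
lemma linv_lower: "i < j \<Longrightarrow> linv A i j = 0"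
  by (subst linv.simps) simp

lemma rinv_right:
  assumes A: "\<forall>i j. i < j \<longrightarrow> A i j = 0" and d: "\<forall>i. A i i \<noteq> 0"
  shows "mmul A (rinv A) = mid"
proof (intro ext)
  fix i j
  have "mmul A (rinv A) i j = (\<Sum>k\<in>{..i}. A i k * rinv A k j)"
    unfolding mmul_def by (rule infsum_supp) (use A in auto)
  also have "\<dots> = A i i * rinv A i j + (\<Sum>k<i. A i k * rinv A k j)"
    by (simp add: lessThan_Suc_atMost[symmetric])
  also have "\<dots> = mid i j"
  proof (cases "i < j")
    case True
    then show ?thesis by (simp add: rinv_lower mid_def)
  next
    case False
    then show ?thesis using d[rule_format, of i]
      by (subst (1) rinv.simps) (simp add: mid_def)
  qed
  finally show "mmul A (rinv A) i j = mid i j" .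
qed

lemma linv_left:
  assumes A: "\<forall>i j. i < j \<longrightarrow> A i j = 0" and d: "\<forall>i. A i i \<noteq> 0"
  shows "mmul (linv A) A = mid"
proof (intro ext)
  fix i j
  show "mmul (linv A) A i j = mid i j"
  proof (cases "i < j")
    case True
    have "mmul (linv A) A i j = 0" unfolding mmul_def
      by (rule infsum_0) (use True A linv_lower in \<open>metis mult_eq_0_iff not_less_iff_gr_or_eq order.strict_trans\<close>)
    then show ?thesis using True by (simp add: mid_def)
  next
    case False
    have "mmul (linv A) A i j = (\<Sum>k\<in>{j..i}. linv A i k * A k j)"
      unfolding mmul_def by (rule infsum_supp) (use A linv_lower in \<open>auto simp: not_le\<close>)
    also have "{j..i} = insert j {j<..i}" using False by auto
    also have "(\<Sum>k\<in>insert j {j<..i}. linv A i k * A k j) = linv A i j * A j j + (\<Sum>k\<in>{j<..i}. linv A i k * A k j)"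
      by simp
    also have "\<dots> = mid i j"
      using d[rule_format, of j] False by (subst (1) linv.simps) (simp add: mid_def)
    finally show ?thesis .
  qed
qed

lemma lower_inverse:
  assumes A: "\<forall>i j. i < j \<longrightarrow> A i j = 0" and d: "\<forall>i. A i i \<noteq> 0"
  shows "minv A = rinv A" "mmul A (minv A) = mid" "mmul (minv A) A = mid"
    "\<forall>i j. i < j \<longrightarrow> minv A i j = 0"
proof -
  have R: "mmul A (rinv A) = mid" by (rule rinv_right[OF A d])
  have L: "mmul (linv A) A = mid" by (rule linv_left[OF A d])
  have lr: "rowfin (linv A)" by (rule lower_rowfin) (simp add: linv_lower)
  have rr: "rowfin (rinv A)" by (rule lower_rowfin) (simp add: rinv_lower)
  have "linv A = mmul (linv A) (mmul A (rinv A))" using R by simp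
  also have "\<dots> = mmul (mmul (linv A) A) (rinv A)" by (rule assoc_rr[symmetric]) (use lr lower_rowfin[OF A] in auto)
  finally have eq: "linv A = rinv A" using L by simp
  show m: "minv A = rinv A" by (rule minv_lower[OF A rr R]) (use L eq in simp)
  show "mmul A (minv A) = mid" "mmul (minv A) A = mid" using m R L eq by auto
  show "\<forall>i j. i < j \<longrightarrow> minv A i j = 0" using m rinv_lower by simp
qed

lemma upper_inverse:
  assumes A: "\<forall>i j. j < i \<longrightarrow> A i j = 0" and d: "\<forall>i. A i i \<noteq> 0"
  shows "mmul A (minv A) = mid" "mmul (minv A) A = mid"
    "\<forall>i j. j < i \<longrightarrow> minv A i j = 0"
proof -
  have At: "\<forall>i j. i < j \<longrightarrow> mtrans A i j = 0" "\<forall>i. mtrans A i i \<noteq> 0" using A d by (auto simp: mtrans_def)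
  note li = lower_inverse[OF At]
  define X where "X = mtrans (minv (mtrans A))"
  have AX: "mmul A X = mid" unfolding X_def using arg_cong[OF li(3), of mtrans] by (simp add: mtrans_mmul)
  have XA: "mmul X A = mid" unfolding X_def using arg_cong[OF li(2), of mtrans] by (simp add: mtrans_mmul)
  have Xu: "\<forall>i j. j < i \<longrightarrow> X i j = 0" using li(4) by (simp add: X_def mtrans_def)
  have "minv A = X" by (rule minv_upper[OF upper_colfin[OF A] upper_colfin[OF Xu] AX XA])
  then show "mmul A (minv A) = mid" "mmul (minv A) A = mid" "\<forall>i j. j < i \<longrightarrow> minv A i j = 0"
    using AX XA Xu by auto
qed




definition shiftm :: "(nat \<Rightarrow> nat) \<Rightarrow> smat" where
  "shiftm \<sigma> = (\<lambda>i j. if j = \<sigma> i then 1 else 0)"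

definition comm :: "(nat \<Rightarrow> nat) \<Rightarrow> smat \<Rightarrow> bool" where
  "comm \<sigma> A \<longleftrightarrow> (\<forall>i l. A (\<sigma> i) (\<sigma> l) = A i l) \<and> (\<forall>i j. j \<notin> range \<sigma> \<longrightarrow> A (\<sigma> i) j = 0)"

lemma infsum_reidx:
  fixes f :: "nat \<Rightarrow> real"
  assumes "inj \<sigma>" "\<And>k. k \<notin> range \<sigma> \<Longrightarrow> f k = 0"
  shows "infsum f UNIV = infsum (\<lambda>k. f (\<sigma> k)) UNIV"
proof -
  have "infsum f UNIV = infsum f (range \<sigma>)"
    by (rule infsum_cong_neutral) (use assms in auto)
  also have "\<dots> = infsum (f \<circ> \<sigma>) UNIV" by (rule infsum_reindex) (use assms in auto)
  finally show ?thesis by (simp add: comp_def)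
qed

lemma shift_left: "mmul (shiftm \<sigma>) A i j = A (\<sigma> i) j"
proof -
  have "mmul (shiftm \<sigma>) A i j = sum (\<lambda>k. shiftm \<sigma> i k * A k j) {\<sigma> i}"
    unfolding mmul_def by (rule infsum_supp) (auto simp: shiftm_def)
  then show ?thesis by (simp add: shiftm_def)
qed

lemma shift_right_in: "inj \<sigma> \<Longrightarrow> mmul A (shiftm \<sigma>) i (\<sigma> k) = A i k"
proof -
  assume inj: "inj \<sigma>"
  have "mmul A (shiftm \<sigma>) i (\<sigma> k) = sum (\<lambda>k'. A i k' * shiftm \<sigma> k' (\<sigma> k)) {k}"
    unfolding mmul_def by (rule infsum_supp) (use inj in \<open>auto simp: shiftm_def inj_eq\<close>)
  then show ?thesis by (simp add: shiftm_def)
qed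

lemma shift_right_out: "j \<notin> range \<sigma> \<Longrightarrow> mmul A (shiftm \<sigma>) i j = 0"
  unfolding mmul_def by (rule infsum_0) (auto simp: shiftm_def)

lemma comm_shift:
  assumes "inj \<sigma>" "comm \<sigma> A"
  shows "mmul (shiftm \<sigma>) A = mmul A (shiftm \<sigma>)"
proof (intro ext)
  fix i j
  show "mmul (shiftm \<sigma>) A i j = mmul A (shiftm \<sigma>) i j"
  proof (cases "j \<in> range \<sigma>")
    case True
    then obtain l where "j = \<sigma> l" by auto
    then show ?thesis using assms by (simp add: shift_left shift_right_in comm_def)
  next
    case False
    then show ?thesis using assms by (simp add: shift_left shift_right_out comm_def)
  qed
qed

lemma comm_mmul:
  assumes inj: "inj \<sigma>" and A: "comm \<sigma> A" and B: "comm \<sigma> B"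
  shows "comm \<sigma> (mmul A B)"
proof -
  have r: "mmul A B (\<sigma> i) j = infsum (\<lambda>k. A i k * B (\<sigma> k) j) UNIV" for i j
  proof -
    have "mmul A B (\<sigma> i) j = infsum (\<lambda>k. A (\<sigma> i) (\<sigma> k) * B (\<sigma> k) j) UNIV"
      unfolding mmul_def by (rule infsum_reidx[OF inj]) (use A in \<open>auto simp: comm_def\<close>)
    then show ?thesis using A by (simp add: comm_def)
  qed
  show ?thesis unfolding comm_def
  proof (intro conjI allI impI)
    fix i l show "mmul A B (\<sigma> i) (\<sigma> l) = mmul A B i l"
      using B by (subst r) (simp add: comm_def mmul_def)
  next
    fix i j assume "j \<notin> range \<sigma>"
    then show "mmul A B (\<sigma> i) j = 0" using B by (simp add: r comm_def)
  qed
qed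

lemma comm_mid: "inj \<sigma> \<Longrightarrow> comm \<sigma> mid"
  unfolding comm_def mid_def by (auto simp: inj_eq)

lemma comm_mpow: "inj \<sigma> \<Longrightarrow> comm \<sigma> A \<Longrightarrow> comm \<sigma> (mpow A m)"
  by (induction m) (auto intro: comm_mmul comm_mid)

lemma comm_infsum:
  assumes "\<And>m. comm \<sigma> (F m)"
  shows "comm \<sigma> (\<lambda>i j. infsum (\<lambda>m. c m * F m i j) S)"
  using assms by (simp add: comm_def)

lemma comm_sum:
  assumes "\<And>a. comm \<sigma> (F a)"
  shows "comm \<sigma> (\<lambda>i j. \<Sum>a\<in>K. F a i j)"
  using assms by (simp add: comm_def)

lemma comm_mexp:
  assumes "inj \<sigma>" "comm \<sigma> X"
  shows "comm \<sigma> (mexp X)"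
proof -
  have "comm \<sigma> (\<lambda>i j. infsum (\<lambda>m. (1 / fact m) * mpow X m i j) UNIV)"
    by (rule comm_infsum) (use assms comm_mpow in auto)
  then show ?thesis by (simp add: mexp_def)
qed

lemma assoc_e1:
  assumes inj: "inj \<sigma>"
  shows "mmul (mmul A (shiftm \<sigma>)) C = mmul A (mmul (shiftm \<sigma>) C)"
proof (intro ext)
  fix i j
  have "mmul (mmul A (shiftm \<sigma>)) C i j = infsum (\<lambda>k. mmul A (shiftm \<sigma>) i (\<sigma> k) * C (\<sigma> k) j) UNIV"
    unfolding mmul_def[of "mmul A (shiftm \<sigma>)"] by (rule infsum_reidx[OF inj]) (simp add: shift_right_out)
  also have "\<dots> = infsum (\<lambda>k. A i k * C (\<sigma> k) j) UNIV"
    using inj by (simp add: shift_right_in)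
  also have "\<dots> = mmul A (mmul (shiftm \<sigma>) C) i j"
    by (simp add: shift_left mmul_def[of A])
  finally show "mmul (mmul A (shiftm \<sigma>)) C i j = mmul A (mmul (shiftm \<sigma>) C) i j" .
qed

lemma assoc_e2:
  assumes inj: "inj \<sigma>"
  shows "mmul (mmul A (mtrans (shiftm \<sigma>))) C = mmul A (mmul (mtrans (shiftm \<sigma>)) C)"
proof -
  have "mtrans (mmul (mmul A (mtrans (shiftm \<sigma>))) C) = mtrans (mmul A (mmul (mtrans (shiftm \<sigma>)) C))"
    using assoc_e1[OF inj, of "mtrans C" "mtrans A"] by (simp add: mtrans_mmul)
  then show ?thesis by (metis mtrans_mtrans)
qed

lemma rowfin_shift: "rowfin (shiftm \<sigma>)"
proof -
  have "{k. shiftm \<sigma> i k \<noteq> 0} = {\<sigma> i}" for i by (auto simp: shiftm_def)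
  then show ?thesis by (simp add: rowfin_def)
qed

lemma colfin_shift: "inj \<sigma> \<Longrightarrow> colfin (shiftm \<sigma>)"
  unfolding colfin_def
proof
  fix j assume "inj \<sigma>"
  have "{k. shiftm \<sigma> k j \<noteq> 0} \<subseteq> {k. \<sigma> k = j}" by (auto simp: shiftm_def)
  moreover have "finite {k. \<sigma> k = j}"
  proof -
    have "{k. \<sigma> k = j} = \<sigma> -` {j}" by auto
    then show ?thesis using finite_vimageI[of "{j}" \<sigma>] \<open>inj \<sigma>\<close> by simp
  qed
  ultimately show "finite {k. shiftm \<sigma> k j \<noteq> 0}" by (rule finite_subset)
qed




locale comp =
  fixes p :: nat and n :: "nat \<Rightarrow> nat"
  assumes p1: "p \<ge> 1" and pos: "\<forall>a\<in>{1..p}. n a > 0"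
begin

abbreviation "N \<equiv> cnorm p n"
definition Ps :: "nat \<Rightarrow> nat" where "Ps a = (\<Sum>c=1..a. n c)"
definition Bs :: "nat \<Rightarrow> nat" where "Bs a = (\<Sum>c=1..<a. n c)"
definition idx :: "nat \<Rightarrow> nat \<Rightarrow> nat" where
  "idx a k = (k div n a) * N + Bs a + k mod n a"
definition sig :: "nat \<Rightarrow> nat" where
  "sig i = idx (aidx p n i) (kidx p n i + 1)"

lemma N_Ps: "N = Ps p" by (simp add: cnorm_def Ps_def)

lemma Ps_Bs: "a \<ge> 1 \<Longrightarrow> Ps a = Bs a + n a"
proof -
  assume "a \<ge> 1"
  then have "{1..a} = insert a {1..<a}" by auto
  then show ?thesis by (simp add: Ps_def Bs_def)
qed

lemma Bs_Ps: "a \<ge> 1 \<Longrightarrow> Bs a = Ps (a - 1)"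
proof -
  assume "a \<ge> 1"
  then have "{1..<a} = {1..a-1}" by auto
  then show ?thesis by (simp add: Ps_def Bs_def)
qed

lemma Ps_mono: "a \<le> b \<Longrightarrow> Ps a \<le> Ps b"
  unfolding Ps_def by (rule sum_mono2) auto

lemma Ps_0[simp]: "Ps 0 = 0" by (simp add: Ps_def)

lemma N_pos: "N > 0"
proof -
  have "Ps p = Bs p + n p" using p1 Ps_Bs by simp
  moreover have "n p > 0" using pos p1 by auto
  ultimately show ?thesis using N_Ps by simp
qed

lemma aidx_props:
  shows "1 \<le> aidx p n i" "aidx p n i \<le> p"
    "Bs (aidx p n i) \<le> i mod N" "i mod N < Ps (aidx p n i)"
proof -
  define r where "r = i mod N"
  have rN: "r < Ps p" using N_pos N_Ps r_def by simp
  have ad: "aidx p n i = (LEAST a. r < Ps a)" by (simp add: aidx_def r_def Ps_def)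
  show lt: "i mod N < Ps (aidx p n i)" unfolding ad r_def[symmetric] by (rule LeastI[of _ p]) (rule rN)
  show "aidx p n i \<le> p" unfolding ad by (rule Least_le) (rule rN)
  show ge: "1 \<le> aidx p n i" using lt by (cases "aidx p n i") auto
  have "\<not> r < Ps (aidx p n i - 1)"
    unfolding ad by (rule not_less_Least) (use ge ad in auto)
  then show "Bs (aidx p n i) \<le> i mod N" using Bs_Ps[OF ge] r_def by simp
qed

lemma aidx_range: "aidx p n i \<in> {1..p}"
  using aidx_props by auto

lemma idx_lt: assumes a: "a \<in> {1..p}" shows "Bs a + k mod n a < N"
proof -
  have "k mod n a < n a" using pos a by auto
  moreover have "Ps a \<le> Ps p" using a by (auto intro: Ps_mono)
  ultimately show ?thesis using Ps_Bs[of a] a N_Ps by auto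
qed

lemma idx_divmod: assumes a: "a \<in> {1..p}"
  shows "idx a k div N = k div n a" "idx a k mod N = Bs a + k mod n a"
  using idx_lt[OF a, of k] N_pos unfolding idx_def
  by (simp_all add: add.assoc)

lemma aidx_idx: assumes a: "a \<in> {1..p}" shows "aidx p n (idx a k) = a"
proof -
  define r where "r = Bs a + k mod n a"
  have "aidx p n (idx a k) = (LEAST b. r < Ps b)"
    by (simp add: aidx_def idx_divmod[OF a] r_def Ps_def)
  also have "\<dots> = a"
  proof (rule Least_equality)
    show "r < Ps a" using pos a Ps_Bs[of a] by (auto simp: r_def)
  next
    fix b assume b: "r < Ps b"
    show "a \<le> b"
    proof (rule ccontr)
      assume "\<not> a \<le> b"
      then have "Ps b \<le> Ps (a - 1)" by (intro Ps_mono) auto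
      then show False using b Bs_Ps[of a] a by (auto simp: r_def)
    qed
  qed
  finally show ?thesis .
qed

lemma kidx_idx: assumes a: "a \<in> {1..p}" shows "kidx p n (idx a k) = k"
  unfolding kidx_def Bs_def[symmetric] using aidx_idx[OF a, of k] idx_divmod[OF a, of k]
  by simp

lemma idx_aidx: "idx (aidx p n i) (kidx p n i) = i"
proof -
  define a where "a = aidx p n i"
  define r where "r = i mod N"
  define q where "q = i div N"
  have a1: "a \<in> {1..p}" using aidx_range a_def by simp
  have na: "n a > 0" using pos a1 by auto
  have B: "Bs a \<le> r" "r < Bs a + n a" using aidx_props[of i] Ps_Bs[of a] a1 by (auto simp: a_def r_def)
  have k: "kidx p n i = q * n a + (r - Bs a)" by (simp add: kidx_def a_def q_def r_def Bs_def)
  have lt: "r - Bs a < n a" using B by auto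
  have "kidx p n i div n a = q" "kidx p n i mod n a = r - Bs a"
    using lt na by (simp_all add: k)
  then have "idx a (kidx p n i) = q * N + Bs a + (r - Bs a)" by (simp add: idx_def)
  also have "\<dots> = i" using B div_mult_mod_eq[of i N] by (simp add: q_def r_def)
  finally show ?thesis by (simp add: a_def)
qed

lemma ak_inj: "aidx p n i = aidx p n j \<Longrightarrow> kidx p n i = kidx p n j \<Longrightarrow> i = j"
  by (metis idx_aidx)

lemma aidx_sig[simp]: "aidx p n (sig i) = aidx p n i"
  unfolding sig_def by (rule aidx_idx[OF aidx_range])
lemma kidx_sig[simp]: "kidx p n (sig i) = kidx p n i + 1"
  unfolding sig_def by (rule kidx_idx[OF aidx_range])

lemma sig_inj: "inj sig"
proof (rule injI)
  fix x y assume e: "sig x = sig y"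
  have "aidx p n x = aidx p n y" using arg_cong[OF e, of "aidx p n"] by (simp only: aidx_sig)
  moreover have "kidx p n x = kidx p n y" using arg_cong[OF e, of "kidx p n"] by (simp only: kidx_sig add_right_cancel)
  ultimately show "x = y" by (rule ak_inj)
qed

lemma sig_range: "kidx p n j \<ge> 1 \<Longrightarrow> j \<in> range sig"
proof -
  assume k: "kidx p n j \<ge> 1"
  define i where "i = idx (aidx p n j) (kidx p n j - 1)"
  have "aidx p n i = aidx p n j" "kidx p n i = kidx p n j - 1"
    unfolding i_def by (rule aidx_idx[OF aidx_range], rule kidx_idx[OF aidx_range])
  then have "sig i = j" using k by (rule_tac ak_inj) simp_all
  then show ?thesis by auto
qed

lemma dm_helper: "(r::nat) < m \<Longrightarrow> (r + q * m) div m = q \<and> (r + q * m) mod m = r"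
  by simp

lemma idx_Suc: assumes a: "a \<in> {1..p}" shows "idx a k < idx a (Suc k)"
proof -
  have na: "n a > 0" using pos a by auto
  have km: "k = k mod n a + k div n a * n a" by simp
  have kl: "k mod n a < n a" using na by simp
  show ?thesis
  proof (cases "Suc (k mod n a) = n a")
    case True
    have e: "Suc k = 0 + Suc (k div n a) * n a" using True km by (metis add_Suc mult_Suc plus_nat.add_0)
    have "Suc k div n a = Suc (k div n a)" "Suc k mod n a = 0"
      using dm_helper[of 0 "n a" "Suc (k div n a)"] na unfolding e[symmetric] by auto
    then show ?thesis using idx_lt[OF a, of k] by (simp add: idx_def)
  next
    case False
    have e: "Suc k = Suc (k mod n a) + k div n a * n a" using km by simp
    have "Suc (k mod n a) < n a" using False kl by simp
    then have "Suc k div n a = k div n a" "Suc k mod n a = Suc (k mod n a)"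
      using dm_helper[of "Suc (k mod n a)" "n a" "k div n a"] unfolding e[symmetric] by auto
    then show ?thesis by (simp add: idx_def)
  qed
qed

lemma sig_gt: "i < sig i"
  using idx_Suc[OF aidx_range, of i "kidx p n i"] by (simp add: sig_def idx_aidx)

lemma Lam_eq: "Lam p n a = (\<lambda>i j. if aidx p n i = a \<and> j = sig i then 1 else 0)"
proof (intro ext)
  fix i j
  have "(aidx p n i = a \<and> aidx p n j = a \<and> kidx p n j = kidx p n i + 1) \<longleftrightarrow> (aidx p n i = a \<and> j = sig i)"
    using ak_inj[of j "sig i"] by auto
  then show "Lam p n a i j = (if aidx p n i = a \<and> j = sig i then 1 else 0)"
    by (simp add: Lam_def)
qed

lemma Ups_eq: "Ups p n = shiftm sig"
proof (intro ext)
  fix i j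
  have "Ups p n i j = (\<Sum>a\<in>{1..p}. if aidx p n i = a \<and> j = sig i then 1 else 0)"
    by (simp add: Ups_def Lam_eq)
  also have "\<dots> = (if j = sig i then 1 else 0)"
    using aidx_range[of i] by (cases "j = sig i") auto
  finally show "Ups p n i j = shiftm sig i j" by (simp add: shiftm_def)
qed

lemma Ups_msum: "Ups p n = msum {1..p} (Lam p n)"
  by (simp add: Ups_def msum_def)

lemma Lam_rowfin: "rowfin (Lam p n a)"
proof -
  have "{k. Lam p n a i k \<noteq> 0} \<subseteq> {sig i}" for i by (auto simp: Lam_eq)
  then show ?thesis unfolding rowfin_def by (meson finite.emptyI finite_insert finite_subset)
qed

lemma Lam_upper: "i \<ge> j \<Longrightarrow> Lam p n a i j = 0"
  using sig_gt[of i] by (auto simp: Lam_eq)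

lemma Lam_orth: "a \<noteq> b \<Longrightarrow> mmul (Lam p n a) (Lam p n b) = zmat"
proof (intro ext)
  fix i j assume ab: "a \<noteq> b"
  show "mmul (Lam p n a) (Lam p n b) i j = zmat i j"
    unfolding mmul_def zmat_def by (rule infsum_0) (use ab in \<open>auto simp: Lam_eq\<close>)
qed

lemma Lam_comm: "comm sig (Lam p n a)"
  unfolding comm_def Lam_eq using sig_inj by (auto simp: inj_eq)

lemma Ups_chi: "mvmul (Ups p n) (chi p n a x) = (\<lambda>i. x * chi p n a x i)"
proof (intro ext)
  fix i
  have "mvmul (Ups p n) (chi p n a x) i = chi p n a x (sig i)"
    by (simp add: mvmul_vm[of _ _ _ 0] Ups_eq shift_left vm_def)
  then show "mvmul (Ups p n) (chi p n a x) i = x * chi p n a x i"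
    by (simp add: chi_def)
qed

end




definition lowt :: "smat \<Rightarrow> bool" where "lowt A \<longleftrightarrow> (\<forall>i j. i < j \<longrightarrow> A i j = 0)"
definition slowt :: "smat \<Rightarrow> bool" where "slowt A \<longleftrightarrow> (\<forall>i j. i \<le> j \<longrightarrow> A i j = 0)"

lemma lowt_mmul: "lowt A \<Longrightarrow> lowt B \<Longrightarrow> lowt (mmul A B)"
  unfolding lowt_def by (meson mmul_nz not_le order.strict_trans1)
lemma slowt_mmul: "lowt A \<Longrightarrow> slowt B \<Longrightarrow> slowt (mmul A B)"
  unfolding lowt_def slowt_def by (meson mmul_nz not_le order.strict_trans1)
lemma slowt_lowt: "slowt A \<Longrightarrow> lowt A"
  unfolding lowt_def slowt_def by auto
lemma lowt_mid: "lowt mid" by (simp add: lowt_def mid_def)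
lemma lowt_mpow: "lowt A \<Longrightarrow> lowt (mpow A m)"
  by (induction m) (auto intro: lowt_mmul lowt_mid)
lemma slowt_mpow: "slowt A \<Longrightarrow> m \<ge> 1 \<Longrightarrow> slowt (mpow A m)"
  by (cases m) (auto intro: slowt_mmul lowt_mpow slowt_lowt)

lemma mexp_lowt_unit:
  assumes "slowt Y"
  shows "\<forall>i j. i < j \<longrightarrow> mexp Y i j = 0" "\<forall>i. mexp Y i i = 1"
proof -
  have lw: "lowt (mpow Y m)" for m using assms lowt_mpow slowt_lowt by blast
  show "\<forall>i j. i < j \<longrightarrow> mexp Y i j = 0"
    using lw unfolding mexp_def lowt_def by (auto intro!: infsum_0)
  show "\<forall>i. mexp Y i i = 1"
  proof
    fix i
    have "mexp Y i i = sum (\<lambda>m. mpow Y m i i / fact m) {0}"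
      unfolding mexp_def
    proof (rule infsum_supp)
      fix m :: nat assume "m \<notin> {0}"
      then have "slowt (mpow Y m)" using assms slowt_mpow by auto
      then show "mpow Y m i i / fact m = 0" by (simp add: slowt_def)
    qed simp
    then show "mexp Y i i = 1" by (simp add: mid_def)
  qed
qed

definition commT :: "(nat \<Rightarrow> nat) \<Rightarrow> smat \<Rightarrow> bool" where
  "commT \<sigma> A \<longleftrightarrow> comm \<sigma> (mtrans A)"

lemma commT_mmul: "inj \<sigma> \<Longrightarrow> commT \<sigma> A \<Longrightarrow> commT \<sigma> B \<Longrightarrow> commT \<sigma> (mmul A B)"
  unfolding commT_def by (simp add: mtrans_mmul comm_mmul)
lemma commT_mpow: "inj \<sigma> \<Longrightarrow> commT \<sigma> A \<Longrightarrow> commT \<sigma> (mpow A m)"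
proof (induction m)
  case 0 then show ?case by (simp add: commT_def comm_mid)
next
  case (Suc m) then show ?case by (simp add: commT_mmul)
qed

context comp
begin

lemma W0_comm: "comm sig (W0 p n t)"
proof -
  have "comm sig (\<lambda>i k. \<Sum>a\<in>{1..p}. (\<lambda>a i k. infsum (\<lambda>j. t j a * mpow (Lam p n a) j i k) {1..}) a i k)"
  proof (rule comm_sum)
    fix a
    show "comm sig (\<lambda>i k. infsum (\<lambda>j. t j a * mpow (Lam p n a) j i k) {1..})"
      by (rule comm_infsum) (rule comm_mpow[OF sig_inj Lam_comm])
  qed
  then have "comm sig (\<lambda>i k. \<Sum>a=1..p. infsum (\<lambda>j. t j a * mpow (Lam p n a) j i k) {1..})" by simp
  then show ?thesis unfolding W0_def by (rule comm_mexp[OF sig_inj])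
qed

lemma W0bar_commT: "commT sig (W0bar p n tb)"
proof -
  define Y where "Y = (\<lambda>i k. \<Sum>b=1..p. infsum (\<lambda>j. tb j b * mpow (mtrans (Lam p n b)) j i k) {1..})"
  have cT: "commT sig (mtrans (Lam p n b))" for b by (simp add: commT_def Lam_comm)
  have "comm sig (\<lambda>i k. \<Sum>b\<in>{1..p}. (\<lambda>b i k. infsum (\<lambda>j. tb j b * mtrans (mpow (mtrans (Lam p n b)) j) i k) {1..}) b i k)"
  proof (rule comm_sum)
    fix b
    show "comm sig (\<lambda>i k. infsum (\<lambda>j. tb j b * mtrans (mpow (mtrans (Lam p n b)) j) i k) {1..})"
      by (rule comm_infsum) (use commT_mpow[OF sig_inj cT] in \<open>simp add: commT_def\<close>)
  qed
  then have cY: "commT sig Y" by (simp add: commT_def Y_def mtrans_def)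
  have "comm sig (\<lambda>i j. infsum (\<lambda>m. (1 / fact m) * mtrans (mpow Y m) i j) UNIV)"
    by (rule comm_infsum) (use commT_mpow[OF sig_inj cY] in \<open>simp add: commT_def\<close>)
  then show ?thesis by (simp add: commT_def W0bar_def mexp_def Y_def mtrans_def)
qed

lemma W0bar_lower: "\<forall>i j. i < j \<longrightarrow> W0bar p n tb i j = 0" "\<forall>i. W0bar p n tb i i = 1"
proof -
  define Y where "Y = (\<lambda>i k. \<Sum>b=1..p. infsum (\<lambda>j. tb j b * mpow (mtrans (Lam p n b)) j i k) {1..})"
  have sl: "slowt (mtrans (Lam p n b))" for b by (simp add: slowt_def mtrans_def Lam_upper)
  have "slowt Y" unfolding slowt_def Y_def
  proof (intro allI impI)
    fix i k :: nat assume "i \<le> k"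
    then show "(\<Sum>b=1..p. infsum (\<lambda>j. tb j b * mpow (mtrans (Lam p n b)) j i k) {1..}) = 0"
      using slowt_mpow[OF sl] by (auto simp: slowt_def intro!: sum.neutral infsum_0)
  qed
  note r = mexp_lowt_unit[OF this]
  show "\<forall>i j. i < j \<longrightarrow> W0bar p n tb i j = 0" "\<forall>i. W0bar p n tb i i = 1"
    using r by (simp_all add: W0bar_def Y_def)
qed

end

lemma mmul_Tshift: "mmul A (mtrans (shiftm \<sigma>)) i j = A i (\<sigma> j)"
proof -
  have "mmul A (mtrans (shiftm \<sigma>)) i j = sum (\<lambda>k. A i k * mtrans (shiftm \<sigma>) k j) {\<sigma> j}"
    unfolding mmul_def by (rule infsum_supp) (auto simp: shiftm_def mtrans_def)
  then show ?thesis by (simp add: shiftm_def mtrans_def)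
qed

lemma commT_shift:
  assumes "inj \<sigma>" "commT \<sigma> A"
  shows "mmul (mtrans (shiftm \<sigma>)) A = mmul A (mtrans (shiftm \<sigma>))"
proof -
  have "mmul (shiftm \<sigma>) (mtrans A) = mmul (mtrans A) (shiftm \<sigma>)"
    using comm_shift assms by (simp add: commT_def)
  then have "mtrans (mmul (shiftm \<sigma>) (mtrans A)) = mtrans (mmul (mtrans A) (shiftm \<sigma>))" by simp
  then show ?thesis by (simp add: mtrans_mmul)
qed




theorem proposition3p9:
  fixes M :: "real measure" and I :: "real set"
    and w1 w2 :: "nat \<Rightarrow> real \<Rightarrow> real"
    and p1 p2 :: nat and n1 n2 :: "nat \<Rightarrow> nat"
    and t tb :: "nat \<Rightarrow> nat \<Rightarrow> real"
    and S Sb :: smat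
  assumes meas: "sets M = sets borel" "finite_measure M"
    and intv: "is_interval I" "emeasure M (UNIV - I) = 0"
    and comp1: "p1 \<ge> 1" "\<forall>a\<in>{1..p1}. n1 a > 0"
    and comp2: "p2 \<ge> 1" "\<forall>b\<in>{1..p2}. n2 b > 0"
    and mom_int: "\<forall>i j. integrable M (\<lambda>x. x ^ (kidx p1 n1 i + kidx p2 n2 j)
                        * w1 (aidx p1 n1 i) x * w2 (aidx p2 n2 j) x)"
    and conv1: "\<forall>i j. (\<lambda>k. W0 p1 n1 t i k * gmom M w1 w2 p1 n1 p2 n2 k j) summable_on UNIV"
    and conv2: "\<forall>i j. (\<lambda>k. mmul (W0 p1 n1 t) (gmom M w1 w2 p1 n1 p2 n2) i k
                          * minv (W0bar p2 n2 tb) k j) summable_on UNIV"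
    and S_lt: "\<forall>i. S i i = 1" "\<forall>i j. i < j \<longrightarrow> S i j = 0"
    and Sb_ut: "\<forall>i. Sb i i \<noteq> 0" "\<forall>i j. j < i \<longrightarrow> Sb i j = 0"
    and factor: "mmul (mmul (W0 p1 n1 t) (gmom M w1 w2 p1 n1 p2 n2)) (minv (W0bar p2 n2 tb))
               = mmul (minv S) Sb"
  shows "\<forall>m\<ge>1.
     mpow (mmul (mmul S (Ups p1 n1)) (minv S)) m
       = (\<lambda>i j. \<Sum>a=1..p1. mpow (mmul (mmul S (Lam p1 n1 a)) (minv S)) m i j)
   \<and> mpow (mmul (mmul S (Ups p1 n1)) (minv S)) m
       = (\<lambda>i j. \<Sum>b=1..p2. mpow (mmul (mmul Sb (mtrans (Lam p2 n2 b))) (minv Sb)) m i j)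
   \<and> (\<forall>a\<in>{1..p1}. \<forall>x::real.
        mvmul (mpow (mmul (mmul S (Ups p1 n1)) (minv S)) m) (mvmul S (chi p1 n1 a x))
          = (\<lambda>i. x ^ m * mvmul S (chi p1 n1 a x) i))
   \<and> (\<forall>b\<in>{1..p2}. \<forall>x::real.
        mvmul (mtrans (mpow (mmul (mmul S (Ups p1 n1)) (minv S)) m))
              (mvmul (mtrans (minv Sb)) (chi p2 n2 b x))
          = (\<lambda>i. x ^ m * mvmul (mtrans (minv Sb)) (chi p2 n2 b x) i))"
proof -
  interpret c1: comp p1 n1 using comp1 by unfold_locales auto
  interpret c2: comp p2 n2 using comp2 by unfold_locales auto
  define W where "W = W0 p1 n1 t"
  define g where "g = gmom M w1 w2 p1 n1 p2 n2"
  define Wb where "Wb = W0bar p2 n2 tb"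
  define V where "V = minv Wb"
  define L where "L = minv S"
  define U where "U = minv Sb"
  define Y where "Y = Ups p1 n1"
  define Y2 where "Y2 = Ups p2 n2"
  define T where "T = mtrans Y2"
  define G0 where "G0 = mmul W g"
  define G where "G = mmul L Sb"
  define J where "J = mmul (mmul S Y) L"
  have Ysh: "Y = shiftm c1.sig" by (simp add: Y_def c1.Ups_eq)
  have Y2sh: "Y2 = shiftm c2.sig" by (simp add: Y2_def c2.Ups_eq)
  have Slow: "\<forall>i j. i < j \<longrightarrow> S i j = 0" "\<forall>i. S i i \<noteq> 0" using S_lt by auto
  note Sinv = lower_inverse[OF Slow]
  have SL: "mmul S L = mid" and LS: "mmul L S = mid" and Llow: "\<forall>i j. i < j \<longrightarrow> L i j = 0"
    using Sinv by (simp_all add: L_def)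
  note Sbinv = upper_inverse[OF Sb_ut(2) Sb_ut(1)]
  have SbU: "mmul Sb U = mid" and USb: "mmul U Sb = mid" and Uup: "\<forall>i j. j < i \<longrightarrow> U i j = 0"
    using Sbinv by (simp_all add: U_def)
  have Wbl: "\<forall>i j. i < j \<longrightarrow> Wb i j = 0" "\<forall>i. Wb i i \<noteq> 0"
    using c2.W0bar_lower by (simp_all add: Wb_def)
  note Wbinv = lower_inverse[OF Wbl]
  have WbV: "mmul Wb V = mid" and VWb: "mmul V Wb = mid" and Vlow: "\<forall>i j. i < j \<longrightarrow> V i j = 0"
    using Wbinv by (simp_all add: V_def)
  have rS: "rowfin S" by (rule lower_rowfin[OF Slow(1)])
  have rL: "rowfin L" by (rule lower_rowfin[OF Llow])
  have cU: "colfin U" by (rule upper_colfin[OF Uup])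
  have cSb: "colfin Sb" by (rule upper_colfin[OF Sb_ut(2)])
  have rV: "rowfin V" by (rule lower_rowfin[OF Vlow])
  have rWb: "rowfin Wb" by (rule lower_rowfin[OF Wbl(1)])
  have rY: "rowfin Y" by (simp add: Ysh rowfin_shift)
  have rY2: "rowfin Y2" by (simp add: Y2sh rowfin_shift)
  have cT: "colfin T" by (simp add: T_def colfin_rowfin rY2)
  have rT: "rowfin T" by (simp add: T_def Y2sh colfin_rowfin[symmetric] colfin_shift c2.sig_inj)
  have YW: "mmul Y W = mmul W Y"
    unfolding Ysh W_def by (rule comm_shift[OF c1.sig_inj c1.W0_comm])
  have TWb: "mmul T Wb = mmul Wb T"
    unfolding T_def Y2sh Wb_def by (rule commT_shift[OF c2.sig_inj c2.W0bar_commT])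
  have TV: "mmul T V = mmul V T"
  proof -
    have "mmul T V = mmul (mmul V Wb) (mmul T V)" using VWb by simp
    also have "\<dots> = mmul V (mmul Wb (mmul T V))" by (rule assoc_rr[OF rV rWb])
    also have "mmul Wb (mmul T V) = mmul (mmul Wb T) V" by (rule assoc_rr[OF rWb rT, symmetric])
    also have "\<dots> = mmul (mmul T Wb) V" by (simp add: TWb)
    also have "\<dots> = mmul T (mmul Wb V)" by (rule assoc_rr[OF rT rWb])
    finally show ?thesis using WbV by simp
  qed
  have gsh: "mmul Y g = mmul g T"
  proof (intro ext)
    fix i j
    show "mmul Y g i j = mmul g T i j"
      by (simp add: Ysh T_def Y2sh shift_left mmul_Tshift g_def gmom_def)
  qed
  have G0sh: "mmul Y G0 = mmul G0 T"
  proof -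
    have "mmul Y G0 = mmul (mmul Y W) g"
    proof (intro ext)
      fix i j
      show "mmul Y G0 i j = mmul (mmul Y W) g i j" unfolding G0_def
        by (rule assoc_row[symmetric]) (use rY conv1 in \<open>auto simp: rowfin_def W_def g_def\<close>)
    qed
    also have "\<dots> = mmul (mmul W Y) g" by (simp add: YW)
    also have "\<dots> = mmul W (mmul Y g)" unfolding Ysh by (rule assoc_e1[OF c1.sig_inj])
    also have "\<dots> = mmul W (mmul g T)" by (simp add: gsh)
    also have "\<dots> = mmul G0 T"
    proof (intro ext)
      fix i j
      show "mmul W (mmul g T) i j = mmul G0 T i j" unfolding G0_def
        by (rule assoc_col[symmetric]) (use cT conv1 in \<open>auto simp: colfin_def W_def g_def\<close>)
    qed
    finally show ?thesis .
  qed
  have GG: "mmul G0 V = G" using factor by (simp add: G0_def W_def g_def V_def Wb_def G_def L_def)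
  have Gsh: "mmul Y G = mmul G T"
  proof -
    have "mmul Y G = mmul (mmul Y G0) V"
    proof (intro ext)
      fix i j
      show "mmul Y G i j = mmul (mmul Y G0) V i j" unfolding GG[symmetric]
        by (rule assoc_row[symmetric]) (use rY conv2 in \<open>auto simp: rowfin_def W_def g_def G0_def V_def Wb_def\<close>)
    qed
    also have "\<dots> = mmul (mmul G0 T) V" by (simp add: G0sh)
    also have "\<dots> = mmul G0 (mmul T V)" unfolding T_def Y2sh by (rule assoc_e2[OF c2.sig_inj])
    also have "\<dots> = mmul G0 (mmul V T)" by (simp add: TV)
    also have "\<dots> = mmul G T"
    proof (intro ext)
      fix i j
      show "mmul G0 (mmul V T) i j = mmul G T i j" unfolding GG[symmetric]
        by (rule assoc_col[symmetric]) (use cT conv2 in \<open>auto simp: colfin_def W_def g_def G0_def V_def Wb_def\<close>)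
    qed
    finally show ?thesis .
  qed
  have LGU: "L = mmul G U"
  proof -
    have "mmul G U = mmul L (mmul Sb U)" unfolding G_def by (rule assoc_rc[OF rL cU])
    then show ?thesis using SbU by simp
  qed
  have SG: "mmul S G = Sb"
  proof -
    have "mmul S G = mmul (mmul S L) Sb" unfolding G_def by (rule assoc_rr[OF rS rL, symmetric])
    then show ?thesis using SL by simp
  qed
  have rSY: "rowfin (mmul S Y)" by (rule rowfin_mmul[OF rS rY])
  have J2: "J = mmul (mmul Sb T) U"
  proof -
    have "J = mmul (mmul S Y) (mmul G U)" unfolding J_def using LGU by simp
    also have "\<dots> = mmul (mmul (mmul S Y) G) U" by (rule assoc_rc[OF rSY cU, symmetric])
    also have "mmul (mmul S Y) G = mmul S (mmul Y G)" by (rule assoc_rr[OF rS rY])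
    also have "\<dots> = mmul S (mmul G T)" by (simp add: Gsh)
    also have "\<dots> = mmul (mmul S G) T" by (rule assoc_rc[OF rS cT, symmetric])
    finally show ?thesis using SG by simp
  qed
  have rUt: "rowfin (mtrans U)" using cU by (simp add: colfin_rowfin)
  have rSbt: "rowfin (mtrans Sb)" using cSb by (simp add: colfin_rowfin)
  have SbUt: "mmul (mtrans Sb) (mtrans U) = mid" using arg_cong[OF USb, of mtrans] by (simp add: mtrans_mmul)
  have Jt: "mtrans J = mmul (mmul (mtrans U) Y2) (mtrans Sb)"
  proof -
    have "mtrans J = mmul (mtrans U) (mmul Y2 (mtrans Sb))" by (simp add: J2 mtrans_mmul T_def)
    also have "\<dots> = mmul (mmul (mtrans U) Y2) (mtrans Sb)" by (rule assoc_rr[OF rUt rY2, symmetric])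
    finally show ?thesis .
  qed
  have rJt: "rowfin (mtrans J)" unfolding Jt by (intro rowfin_mmul rUt rY2 rSbt)
  have pJt: "mtrans (mpow J m) = mpow (mtrans J) m" for m by (rule mtrans_mpow[OF rJt])
  have Jdef: "mmul (mmul S (Ups p1 n1)) (minv S) = J" by (simp add: J_def Y_def L_def)
  show ?thesis
  proof (intro allI impI conjI)
    fix m :: nat assume m: "1 \<le> m"
    show "mpow (mmul (mmul S (Ups p1 n1)) (minv S)) m
       = (\<lambda>i j. \<Sum>a=1..p1. mpow (mmul (mmul S (Lam p1 n1 a)) (minv S)) m i j)"
    proof -
      have "mpow (mmul (mmul S (msum {1..p1} (Lam p1 n1))) L) m
          = msum {1..p1} (\<lambda>a. mpow (mmul (mmul S (Lam p1 n1 a)) L) m)"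
        by (rule GL[OF _ rS rL LS _ _ m]) (auto simp: c1.Lam_rowfin c1.Lam_orth)
      then show ?thesis unfolding c1.Ups_msum L_def by (simp add: msum_def)
    qed
    show "mpow (mmul (mmul S (Ups p1 n1)) (minv S)) m
       = (\<lambda>i j. \<Sum>b=1..p2. mpow (mmul (mmul Sb (mtrans (Lam p2 n2 b))) (minv Sb)) m i j)"
    proof -
      define Nb where "Nb b = mmul (mmul Sb (mtrans (Lam p2 n2 b))) U" for b
      have Nbt: "mtrans (Nb b) = mmul (mmul (mtrans U) (Lam p2 n2 b)) (mtrans Sb)" for b
      proof -
        have "mtrans (Nb b) = mmul (mtrans U) (mmul (Lam p2 n2 b) (mtrans Sb))" by (simp add: Nb_def mtrans_mmul)
        also have "\<dots> = mmul (mmul (mtrans U) (Lam p2 n2 b)) (mtrans Sb)"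
          by (rule assoc_rr[OF rUt c2.Lam_rowfin, symmetric])
        finally show ?thesis .
      qed
      have rNbt: "rowfin (mtrans (Nb b))" for b unfolding Nbt by (intro rowfin_mmul rUt c2.Lam_rowfin rSbt)
      have "mpow (mmul (mmul (mtrans U) (msum {1..p2} (Lam p2 n2))) (mtrans Sb)) m
          = msum {1..p2} (\<lambda>b. mpow (mmul (mmul (mtrans U) (Lam p2 n2 b)) (mtrans Sb)) m)"
        by (rule GL[OF _ rUt rSbt SbUt _ _ m]) (auto simp: c2.Lam_rowfin c2.Lam_orth)
      then have "mtrans (mpow J m) = msum {1..p2} (\<lambda>b. mtrans (mpow (Nb b) m))"
        unfolding pJt Jt Y2_def c2.Ups_msum mtrans_mpow[OF rNbt] Nbt .
      then have "mtrans (mtrans (mpow J m)) = mtrans (mtrans (msum {1..p2} (\<lambda>b. mpow (Nb b) m)))"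
        by (simp add: mtrans_msum)
      then have "mpow J m = msum {1..p2} (\<lambda>b. mpow (Nb b) m)" by simp
      then show ?thesis by (simp add: J_def Y_def L_def Nb_def U_def msum_def)
    qed
    show "\<forall>a\<in>{1..p1}. \<forall>x::real.
        mvmul (mpow (mmul (mmul S (Ups p1 n1)) (minv S)) m) (mvmul S (chi p1 n1 a x))
          = (\<lambda>i. x ^ m * mvmul S (chi p1 n1 a x) i)"
    proof (intro ballI allI)
      fix a x
      show "mvmul (mpow (mmul (mmul S (Ups p1 n1)) (minv S)) m) (mvmul S (chi p1 n1 a x))
          = (\<lambda>i. x ^ m * mvmul S (chi p1 n1 a x) i)"
        using GE[OF rS rL LS rY, of "chi p1 n1 a x" x m] by (simp add: Y_def c1.Ups_chi L_def)
    qed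
    show "\<forall>b\<in>{1..p2}. \<forall>x::real.
        mvmul (mtrans (mpow (mmul (mmul S (Ups p1 n1)) (minv S)) m))
              (mvmul (mtrans (minv Sb)) (chi p2 n2 b x))
          = (\<lambda>i. x ^ m * mvmul (mtrans (minv Sb)) (chi p2 n2 b x) i)"
    proof (intro ballI allI)
      fix b x
      have "mvmul (mpow (mmul (mmul (mtrans U) Y2) (mtrans Sb)) m) (mvmul (mtrans U) (chi p2 n2 b x))
          = (\<lambda>i. x ^ m * mvmul (mtrans U) (chi p2 n2 b x) i)"
        using GE[OF rUt rSbt SbUt rY2, of "chi p2 n2 b x" x m] by (simp add: Y2_def c2.Ups_chi)
      then show "mvmul (mtrans (mpow (mmul (mmul S (Ups p1 n1)) (minv S)) m))
              (mvmul (mtrans (minv Sb)) (chi p2 n2 b x))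
          = (\<lambda>i. x ^ m * mvmul (mtrans (minv Sb)) (chi p2 n2 b x) i)"
        unfolding Jdef pJt Jt U_def[symmetric] .
    qed
  qed
qed


end
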